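(* Let $\mathbf{r}'=(r'_0,\dots,r'_{2^m-1})\in GF(2^m)^{2^m}$ be arbitrary, and let $f(x)\in GF(2^m)[x]$ be the unique polynomial of degree less than $2^m$ with $f(\omega_j)=r'_j$ for all $0\le j\le 2^m-1$ (equivalently $f(x)=\sum_{j=0}^{2^m-1} r'_j\, s_m(x)/(x-\omega_j)$). Let $0\le\mu\le m$ be an integer and define $$\mathbf{S}_1(x)=\sum_{j=0}^{2^m-1} r'_j\,\frac{s_\mu(x)-s_\mu(\omega_j)}{x-\omega_j}.$$ Then $\mathbf{S}_1(x)$ is the quotient of $f(x)$ upon division by $X_{2^m-2^\mu}(x)$, i.e. $f(x)=\mathbf{S}_1(x)X_{2^m-2^\mu}(x)+\eta_1(x)$ for some $\eta_1(x)$ with $\deg\eta_1(x)<2^m-2^\mu=\deg X_{2^m-2^\mu}(x)$.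
   Context: Fix a basis $\{v_0,\dots,v_{m-1}\}$ of $GF(2^m)$ over $GF(2)$. For $0\le j<2^m$ with binary expansion $j=\sum_{i=0}^{m-1} j_i2^i$ ($j_i\in\{0,1\}$), set $\omega_j=\sum_{i=0}^{m-1} j_i v_i$; these are the $2^m$ distinct elements of $GF(2^m)$. For $0\le\tau\le m$ the subspace polynomial is $s_\tau(x)=\prod_{j=0}^{2^\tau-1}(x-\omega_j)$. For $0\le j<2^m$, $X_j(x)=s_0(x)^{j_0}s_1(x)^{j_1}\cdots s_{m-1}(x)^{j_{m-1}}$, a polynomial of degree $j$. The fraction $\frac{s_\mu(x)-s_\mu(a)}{x-a}$ denotes the exact polynomial quotient. *)

theory Defs
  imports "HOL-Computational_Algebra.Polynomial"
begin

definition is_GF2_basis :: "nat \<Rightarrow> (nat \<Rightarrow> 'a::field) \<Rightarrow> bool" where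
  "is_GF2_basis m v \<longleftrightarrow> (\<forall>x::'a. \<exists>!S. S \<subseteq> {..<m} \<and> x = (\<Sum>i\<in>S. v i))"

definition omega :: "nat \<Rightarrow> (nat \<Rightarrow> 'a::field) \<Rightarrow> nat \<Rightarrow> 'a" where
  "omega m v j = (\<Sum>i<m. if odd (j div 2 ^ i) then v i else 0)"

definition subspace_poly :: "nat \<Rightarrow> (nat \<Rightarrow> 'a::field) \<Rightarrow> nat \<Rightarrow> 'a poly" where
  "subspace_poly m v \<tau> = (\<Prod>j<2 ^ \<tau>. [:- omega m v j, 1:])"

definition Xpoly :: "nat \<Rightarrow> (nat \<Rightarrow> 'a::field) \<Rightarrow> nat \<Rightarrow> 'a poly" where
  "Xpoly m v j = (\<Prod>i<m. subspace_poly m v i ^ ((j div 2 ^ i) mod 2))"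

end

theory Submission
  imports Defs
begin
unbundle bit_operations_syntax

lemma bit_hi_false: "(j::nat) < 2^k \<Longrightarrow> k \<le> i \<Longrightarrow> \<not> odd (j div 2^i)"
proof -
  assume "j < 2^k" "k \<le> i"
  then have "j < 2^i" by (meson less_le_trans one_le_numeral power_increasing)
  then show ?thesis by simp
qed

lemma bit_shift: "(j::nat) < 2^k \<Longrightarrow> odd ((j + 2^k) div 2^i) \<longleftrightarrow> (i = k \<or> odd (j div 2^i))"
proof -
  assume j: "j < 2^k"
  have "j AND 2^k = 0"
  proof (rule bit_eqI)
    fix n show "bit (j AND 2^k) n = bit (0::nat) n"
    proof -
      have "\<not> bit j k" using bit_hi_false[OF j, of k] by (simp add: bit_iff_odd)
      then show ?thesis by (auto simp: bit_and_iff bit_exp_iff)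
    qed
  qed
  then have "j + 2^k = j OR 2^k" by (rule disjunctive_add_eq_or)
  then show ?thesis by (auto simp: bit_iff_odd[symmetric] bit_simps)
qed

lemma omega_0: "omega m v 0 = 0" by (simp add: omega_def)

lemma omega_shift:
  assumes "j < 2^k" "k < m"
  shows "omega m v (j + 2^k) = omega m v j + v k"
proof -
  have "\<And>i. (if odd ((j + 2^k) div 2^i) then v i else 0) =
      (if odd (j div 2^i) then v i else 0) + (if i = k then v k else 0)"
    using assms(1) bit_hi_false[OF assms(1)] by (auto simp: bit_shift)
  then show ?thesis using assms(2) by (simp add: omega_def sum.distrib)
qed

locale gf =
  fixes m :: nat and v :: "nat \<Rightarrow> 'a::{field,finite}"
  assumes char2: "(2::'a) = 0"
    and card: "card (UNIV :: 'a set) = 2 ^ m"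
    and basis: "is_GF2_basis m v"
begin

abbreviation s where "s k \<equiv> subspace_poly m v k"
abbreviation w where "w j \<equiv> omega m v j"

lemma neg_eq: "- (a::'a) = a"
proof -
  have "a + a = 2 * a" by simp
  then have "a + a = 0" using char2 by simp
  then show ?thesis by (simp add: add_eq_0_iff)
qed

lemma vanish:
  fixes p :: "'a poly"
  assumes "\<And>x. poly p x = 0" "degree p < 2^m"
  shows "p = 0"
proof (rule ccontr)
  assume "p \<noteq> 0"
  then have "card {x. poly p x = 0} \<le> degree p" by (rule card_poly_roots_bound)
  also have "{x. poly p x = 0} = UNIV" using assms(1) by auto
  finally show False using card assms(2) by simp
qed

lemma s_0: "s 0 = [:0,1:]"
  by (simp add: subspace_poly_def omega_0)

lemma s_nz: "s k \<noteq> 0"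
  by (simp add: subspace_poly_def)

lemma s_deg: "degree (s k) = 2^k"
proof -
  have "degree (s k) = (\<Sum>j<2^k. degree [:- w j, 1:])"
    unfolding subspace_poly_def by (rule degree_prod_eq_sum_degree) auto
  then show ?thesis by simp
qed

lemma s_lead: "lead_coeff (s k) = 1"
  unfolding subspace_poly_def lead_coeff_prod by simp

lemma s_suc_split:
  assumes "k < m"
  shows "s (Suc k) = s k * (\<Prod>j<2^k. [:-(w j + v k),1:])"
proof -
  have "s (Suc k) = (\<Prod>j\<in>{0..<2^k}. [:- w j, 1:]) * (\<Prod>j\<in>{2^k..<2^k+2^k}. [:- w j, 1:])"
    unfolding subspace_poly_def
    using prod.atLeastLessThan_concat[of 0 "2^k" "2^k+2^k" "\<lambda>j. [:- w j, 1:]"]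
    by (simp add: lessThan_atLeast0 mult_2)
  also have "(\<Prod>j\<in>{2^k..<2^k+2^k}. [:- w j, 1:]) = (\<Prod>j\<in>{0..<2^k}. [:- w (j + 2^k), 1:])"
    using prod.shift_bounds_nat_ivl[of "\<lambda>j. [:- w j, 1:]" 0 "2^k" "2^k"] by simp
  also have "\<dots> = (\<Prod>j<2^k. [:-(w j + v k),1:])"
    using assms by (auto simp: omega_shift lessThan_atLeast0 intro!: prod.cong)
  finally show ?thesis by (simp add: subspace_poly_def lessThan_atLeast0)
qed

definition additive where "additive k \<longleftrightarrow> (\<forall>x y. poly (s k) (x + y) = poly (s k) x + poly (s k) y)"

lemma T_ident:
  assumes "k < m" "additive k"
  shows "(\<Prod>j<2^k. [:-(w j + v k),1:]) = s k - [:poly (s k) (v k):]"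
proof -
  let ?T = "(\<Prod>j<2^k. [:-(w j + v k),1:])"
  let ?p = "poly (s k)"
  have add: "?p (x + y) = ?p x + ?p y" for x y using assms(2) additive_def by blast
  have p0: "?p 0 = 0" using add[of 0 0] char2 by auto
  have pneg: "?p (- y) = - ?p y" for y using add[of y "- y"] p0 by (simp add: eq_neg_iff_add_eq_0 add.commute)
  have "poly ?T x = ?p (x - v k)" for x
    by (simp add: poly_prod subspace_poly_def algebra_simps)
  also have "?p (x - v k) = ?p x - ?p (v k)" for x
    using add[of x "- v k"] pneg by simp
  finally have ev: "poly (?T - (s k - [:poly (s k) (v k):])) x = 0" for x by simp
  have d1: "degree ?T \<le> 2^k"
    using degree_prod_sum_le[of "{..<2^k}" "\<lambda>j. [:-(w j + v k),1:]"] by simp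
  have d2: "degree (s k - [:poly (s k) (v k):]) \<le> 2^k"
    by (rule degree_diff_le) (auto simp: s_deg)
  have "2^k < (2::nat)^m" using assms(1) by simp
  then have "degree (?T - (s k - [:poly (s k) (v k):])) < 2^m"
    using degree_diff_le[OF d1 d2] by linarith
  then have "?T - (s k - [:poly (s k) (v k):]) = 0" using vanish ev by blast
  then show ?thesis by simp
qed

lemma additive_all: "k \<le> m \<Longrightarrow> additive k"
proof (induction k)
  case 0
  then show ?case by (simp add: additive_def s_0)
next
  case (Suc k)
  then have km: "k < m" by simp
  have IH: "additive k" using Suc by simp
  have rec: "s (Suc k) = s k * (s k - [:poly (s k) (v k):])"
    using s_suc_split[OF km] T_ident[OF km IH] by simp
  let ?p = "poly (s k)"
  have add: "?p (x + y) = ?p x + ?p y" for x y using IH additive_def by blast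
  have sq: "(a + b)^2 = a^2 + b^2" for a b :: 'a
  proof -
    have "(a + b)^2 = a^2 + b^2 + 2 * a * b" by (simp add: power2_eq_square algebra_simps)
    then show ?thesis using char2 by simp
  qed
  show ?case unfolding additive_def rec
    by (simp add: add algebra_simps flip: power2_eq_square) (simp add: sq algebra_simps)
qed

lemma s_rec: "k < m \<Longrightarrow> s (Suc k) = s k * (s k - [:poly (s k) (v k):])"
  using s_suc_split T_ident additive_all by simp

lemma claimC:
  assumes "\<mu> \<le> k" "k \<le> m"
  shows "degree (s \<mu> * (\<Prod>i\<in>{\<mu>..<k}. s i) - s k) \<le> 2^k - 2^\<mu>"
  using assms
proof (induction k rule: dec_induct)
  case base
  then show ?case by simp
next
  case (step k)
  let ?e = "s \<mu> * (\<Prod>i\<in>{\<mu>..<k}. s i) - s k"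
  let ?c = "poly (s k) (v k)"
  have km: "k < m" using step by simp
  have IH: "degree ?e \<le> 2^k - 2^\<mu>" using step by simp
  have "s \<mu> * (\<Prod>i\<in>{\<mu>..<Suc k}. s i) - s (Suc k) = ?e * s k + smult ?c (s k)"
    using step(1) by (simp add: s_rec[OF km] prod.atLeastLessThan_Suc algebra_simps)
  moreover have "degree (?e * s k) \<le> 2^(Suc k) - 2^\<mu>"
  proof -
    have "degree (?e * s k) \<le> degree ?e + degree (s k)" by (rule degree_mult_le)
    also have "\<dots> \<le> 2^k - 2^\<mu> + 2^k" using IH s_deg by simp
    also have "\<dots> = 2^(Suc k) - 2^\<mu>" using step(1)
      by (simp add: power_increasing)
    finally show ?thesis .
  qed
  moreover have "degree (smult ?c (s k)) \<le> 2^(Suc k) - 2^\<mu>"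
  proof -
    have "(2::nat)^\<mu> \<le> 2^k" using step(1) by (simp add: power_increasing)
    moreover have "degree (smult ?c (s k)) \<le> 2^k" using degree_smult_le[of ?c "s k"] s_deg[of k] by simp
    ultimately show ?thesis by (simp only: power_Suc)
  qed
  ultimately show ?case by (simp add: degree_add_le)
qed

lemma m_pos: "m \<ge> 1"
proof (rule ccontr)
  assume "\<not> m \<ge> 1"
  then have "card (UNIV :: 'a set) = 1" using card by simp
  moreover have "card {0::'a, 1} \<le> card (UNIV :: 'a set)" by (rule card_mono) auto
  ultimately show False by simp
qed

lemma omega_set: "w j = (\<Sum>i\<in>{i. i < m \<and> odd (j div 2^i)}. v i)"
proof -
  have "w j = (\<Sum>i\<in>{..<m}. if odd (j div 2^i) then v i else 0)" by (simp add: omega_def)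
  also have "\<dots> = (\<Sum>i\<in>{..<m} \<inter> {i. odd (j div 2^i)}. v i)"
    by (simp add: sum.inter_restrict)
  also have "{..<m} \<inter> {i. odd (j div 2^i)} = {i. i < m \<and> odd (j div 2^i)}" by auto
  finally show ?thesis .
qed

lemma omega_inj: "inj_on w {..<2^m}"
proof (rule inj_onI)
  fix j j' assume j: "j \<in> {..<2^m}" and j': "j' \<in> {..<2^m}" and eq: "w j = w j'"
  have "\<exists>!S. S \<subseteq> {..<m} \<and> w j = (\<Sum>i\<in>S. v i)"
    using basis unfolding is_GF2_basis_def by blast
  moreover have "{i. i < m \<and> odd (j div 2^i)} \<subseteq> {..<m} \<and> w j = (\<Sum>i\<in>{i. i < m \<and> odd (j div 2^i)}. v i)"
    using omega_set by auto
  moreover have "{i. i < m \<and> odd (j' div 2^i)} \<subseteq> {..<m} \<and> w j = (\<Sum>i\<in>{i. i < m \<and> odd (j' div 2^i)}. v i)"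
    using omega_set eq by auto
  ultimately have S: "{i. i < m \<and> odd (j div 2^i)} = {i. i < m \<and> odd (j' div 2^i)}" by blast
  show "j = j'"
  proof (rule bit_eqI)
    fix n
    show "bit j n = bit j' n"
    proof (cases "n < m")
      case True then show ?thesis using S by (auto simp: bit_iff_odd)
    next
      case False then show ?thesis using j j' bit_hi_false[of j m n] bit_hi_false[of j' m n]
        by (simp add: bit_iff_odd)
    qed
  qed
qed

lemma omega_surj: "w ` {..<2^m} = UNIV"
proof (rule card_subset_eq)
  show "card (w ` {..<2^m}) = card (UNIV :: 'a set)"
    using card_image[OF omega_inj] card by simp
qed auto

lemma s_m_root: "poly (s m) x = 0"
proof -
  obtain j where "j < 2^m" "x = w j" using omega_surj by (metis UNIV_I imageE lessThan_iff)
  then show ?thesis by (auto simp: subspace_poly_def poly_prod)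
qed

lemma fermat: "(x::'a) ^ (2^m) = x"
proof (cases "x = 0")
  case True then show ?thesis using m_pos by simp
next
  case False
  let ?U = "UNIV - {0::'a}"
  have inj: "inj_on ((*) x) ?U" using False by (auto intro: inj_onI)
  have img: "(*) x ` ?U = ?U"
  proof
    show "(*) x ` ?U \<subseteq> ?U" using False by auto
    show "?U \<subseteq> (*) x ` ?U"
    proof
      fix y assume "y \<in> ?U"
      then have "y = x * (y / x)" "y / x \<in> ?U" using False by auto
      then show "y \<in> (*) x ` ?U" by blast
    qed
  qed
  have "prod (\<lambda>y. y) ?U = prod (\<lambda>y. y) ((*) x ` ?U)" using img by simp
  also have "\<dots> = prod (\<lambda>y. x * y) ?U" using prod.reindex[OF inj, of "\<lambda>y. y"] by simp
  also have "\<dots> = x ^ card ?U * prod (\<lambda>y. y) ?U" by (simp add: prod.distrib)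
  finally have "x ^ card ?U = 1"
    by (metis (no_types, lifting) DiffD2 finite mult.commute mult_cancel_right1 prod_zero_iff singletonI)
  moreover have "card ?U = 2^m - 1" using card by (simp add: card_Diff_singleton)
  ultimately have "x ^ (2^m - 1) = 1" by simp
  then have "x * x ^ (2^m - 1) = x" by simp
  then show ?thesis using m_pos
    by (metis One_nat_def Suc_pred pos2 power_Suc zero_less_power)
qed

lemma s_m_explicit: "s m = monom 1 (2^m) - [:0,1:]"
proof -
  let ?q = "2^m :: nat"
  let ?D = "s m - (monom 1 ?q - [:0,1:])"
  have q2: "?q \<ge> 2" using m_pos
    by (metis One_nat_def power_increasing power_one_right one_le_numeral)
  have co: "coeff ?D n = 0" if "n > ?q - 1" for n
  proof (cases "n = ?q")
    case True
    have "coeff (s m) ?q = 1" using s_lead[of m] s_deg[of m] by simp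
    then show ?thesis using True q2 m_pos by (simp add: coeff_pCons split: nat.split)
  next
    case False
    then have "n > ?q" using that q2 by simp
    then have "coeff (s m) n = 0" using s_deg[of m] by (simp add: coeff_eq_0)
    then show ?thesis using False \<open>n > ?q\<close> q2 by (simp add: coeff_pCons split: nat.split)
  qed
  have "degree ?D \<le> ?q - 1" by (rule degree_le) (use co in auto)
  then have "degree ?D < 2^m" using q2 by linarith
  moreover have "poly ?D x = 0" for x using s_m_root[of x] fermat[of x] by (simp add: poly_monom)
  ultimately show ?thesis using vanish by fastforce
qed

lemma pderiv_lin: "pderiv [:c, 1::'a:] = 1"
  by (simp add: pderiv_pCons)

lemma pderiv_s_m: "pderiv (s m) = 1"
proof -
  have "(of_nat (2^m) :: 'a) = 0" using char2 m_pos
    by (metis of_nat_numeral of_nat_power power_0_left power_eq_0_iff zero_less_iff_neq_zero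
              less_le_trans zero_less_one)
  then have "pderiv (s m) = - 1"
    using m_pos by (simp add: s_m_explicit pderiv_monom pderiv_diff pderiv_pCons zero_power one_pCons)
  also have "(- 1 :: 'a poly) = 1" using neg_eq[of 1] by (simp add: poly_eq_iff)
  finally show ?thesis .
qed

abbreviation lin where "lin j \<equiv> [:- w j, 1::'a:]"
definition P where "P j = (\<Prod>i\<in>{..<2^m} - {j}. lin i)"

lemma s_m_split: "j < 2^m \<Longrightarrow> s m = lin j * P j"
  unfolding subspace_poly_def P_def by (simp add: prod.remove)

lemma P_deg: assumes "j < 2^m" shows "degree (P j) \<le> 2^m - 1"
proof -
  have "degree (P j) \<le> sum (degree \<circ> lin) ({..<2^m} - {j})"
    unfolding P_def by (rule degree_prod_sum_le) simp
  also have "\<dots> = card ({..<2^m} - {j})" by simp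
  also have "\<dots> \<le> 2^m - 1"
    using \<open>j < 2^m\<close> by (auto simp: card_Diff_singleton)
  finally show ?thesis .
qed

lemma P_eval: "j < 2^m \<Longrightarrow> i < 2^m \<Longrightarrow> poly (P j) (w i) = (if i = j then 1 else 0)"
proof (cases "i = j")
  case False
  assume "i < 2^m" "j < 2^m"
  then have "i \<in> {..<2^m} - {j}" using False by auto
  then have "poly (P j) (w i) = 0"
    unfolding P_def poly_prod by (auto simp: prod_zero_iff)
  then show ?thesis using False by simp
next
  case True
  assume "j < 2^m"
  have "pderiv (s m) = lin j * pderiv (P j) + P j * pderiv (lin j)"
    using s_m_split[OF \<open>j < 2^m\<close>] pderiv_mult[of "lin j" "P j"] by simp
  then have "poly (pderiv (s m)) (w j) = poly (P j) (w j)" by (simp add: pderiv_lin)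
  then show ?thesis using True pderiv_s_m by simp
qed

lemma lagrange:
  fixes f :: "'a poly"
  assumes "degree f < 2^m" "\<forall>j<2 ^ m. poly f (w j) = r j"
  shows "f = (\<Sum>j<2^m. smult (r j) (P j))"
proof -
  let ?g = "(\<Sum>j<2^m. smult (r j) (P j))"
  have dg: "degree ?g \<le> 2^m - 1"
    by (rule degree_sum_le) (use P_deg in auto)
  have "degree (f - ?g) < 2^m"
    using degree_diff_le[of f "2^m - 1" ?g] assms(1) dg by (metis Suc_pred' le_simps(2) less_Suc_eq_le not_less_zero pos2 zero_less_power)
  moreover have "poly (f - ?g) x = 0" for x
  proof -
    obtain i where i: "i < 2^m" "x = w i" using omega_surj by (metis UNIV_I imageE lessThan_iff)
    have "poly ?g (w i) = (\<Sum>j<2^m. r j * (if i = j then 1 else 0))"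
      by (simp add: poly_sum P_eval i(1))
    also have "\<dots> = (\<Sum>j<2^m. if i = j then r j else 0)" by (rule sum.cong) auto
    also have "\<dots> = r i" using i(1) by (simp add: sum.delta)
    finally show ?thesis using assms(2) i by simp
  qed
  ultimately show ?thesis using vanish by fastforce
qed

lemma geo: "\<mu> \<le> k \<Longrightarrow> (\<Sum>i\<in>{\<mu>..<k}. (2::nat)^i) = 2^k - 2^\<mu>"
proof (induction k rule: dec_induct)
  case base then show ?case by simp
next
  case (step k)
  have "(2::nat)^\<mu> \<le> 2^k" using step(1) by (simp add: power_increasing)
  then show ?case using step by simp
qed

lemma X_deg: "\<mu> \<le> m \<Longrightarrow> degree (\<Prod>i\<in>{\<mu>..<m}. s i) = 2^m - 2^\<mu>"
  by (subst degree_prod_eq_sum_degree) (auto simp: s_nz s_deg geo)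

lemma Xbits:
  assumes "\<mu> \<le> m" "i < m"
  shows "((2^m - 2^\<mu>) div 2^i) mod 2 = (if \<mu> \<le> i then 1 else (0::nat))"
proof (cases "\<mu> \<le> i")
  case True
  have e: "(2::nat)^m - 2^\<mu> = 2^i * (2^(m-i) - 1) + (2^i - 2^\<mu>)"
  proof -
    have a: "(2::nat)^m = 2^i * 2^(m-i)" using assms by (simp flip: power_add)
    have b: "(2::nat)^\<mu> \<le> 2^i" using True by (simp add: power_increasing)
    have c: "(1::nat) \<le> 2^(m-i)" by simp
    show ?thesis using a b c by (simp add: algebra_simps diff_mult_distrib2)
  qed
  have "(2::nat)^i - 2^\<mu> < 2^i" using True by (simp add: diff_less)
  then have "((2::nat)^m - 2^\<mu>) div 2^i = 2^(m-i) - 1" unfolding e by simp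
  moreover have "odd ((2::nat)^(m-i) - 1)"
  proof -
    obtain t where t: "m - i = Suc t" using assms(2) by (metis Suc_diff_Suc)
    have t1: "(1::nat) \<le> 2^t" by simp
    have "(2::nat)^(m-i) - 1 = 2*(2^t - 1) + 1" unfolding t using t1 by (simp only: power_Suc)
    then show ?thesis by simp
  qed
  ultimately show ?thesis using True by (metis odd_iff_mod_2_eq_one)
next
  case False
  have e: "(2::nat)^m - 2^\<mu> = 2^i * (2^(m-i) - 2^(\<mu>-i))"
  proof -
    have a: "(2::nat)^m = 2^i * 2^(m-i)" using assms by (simp flip: power_add)
    have b: "(2::nat)^\<mu> = 2^i * 2^(\<mu>-i)" using False by (simp flip: power_add)
    show ?thesis using a b by (simp add: diff_mult_distrib2)
  qed
  have "even ((2::nat)^(m-i) - 2^(\<mu>-i))" using False assms by simp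
  then show ?thesis using False unfolding e by simp
qed

lemma X_eq: "\<mu> \<le> m \<Longrightarrow> Xpoly m v (2^m - 2^\<mu>) = (\<Prod>i\<in>{\<mu>..<m}. s i)"
proof -
  assume mu: "\<mu> \<le> m"
  have "Xpoly m v (2^m - 2^\<mu>) = (\<Prod>i<m. if \<mu> \<le> i then s i else 1)"
    unfolding Xpoly_def by (rule prod.cong) (auto simp: Xbits[OF mu])
  also have "\<dots> = (\<Prod>i\<in>{..<m} \<inter> {i. \<mu> \<le> i}. s i)"
    by (simp add: prod.inter_restrict)
  also have "{..<m} \<inter> {i. \<mu> \<le> i} = {\<mu>..<m}" by auto
  finally show ?thesis .
qed

lemma main:
  fixes f :: "'a poly" and r :: "nat \<Rightarrow> 'a" and \<mu> :: nat
  assumes f_deg: "degree f < 2 ^ m"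
    and f_interp: "\<forall>j<2 ^ m. poly f (omega m v j) = r j"
    and mu: "\<mu> \<le> m"
  shows "let S1 = (\<Sum>j<2 ^ m. smult (r j)
                 ((subspace_poly m v \<mu> - [:poly (subspace_poly m v \<mu>) (omega m v j):])
                   div [:- omega m v j, 1:]));
             X = Xpoly m v (2 ^ m - 2 ^ \<mu>)
         in f div X = S1 \<and>
            (\<exists>\<eta>. f = S1 * X + \<eta> \<and> (\<eta> = 0 \<or> degree \<eta> < 2 ^ m - 2 ^ \<mu>))"
proof -
  define D where "D = (2::nat)^m - 2^\<mu>"
  define X where "X = (\<Prod>i\<in>{\<mu>..<m}. s i)"
  define c where "c j = poly (s \<mu>) (w j)" for j
  define Q where "Q j = (s \<mu> - [:c j:]) div lin j" for j
  define S1 where "S1 = (\<Sum>j<2 ^ m. smult (r j) (Q j))"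
  define M where "M j = P j - Q j * X" for j
  have Xe: "Xpoly m v (2 ^ m - 2 ^ \<mu>) = X" using X_eq[OF mu] X_def by simp
  have Xd: "degree X = D" using X_deg[OF mu] X_def D_def by simp
  have Xnz: "X \<noteq> 0" unfolding X_def using s_nz by (simp add: prod_zero_iff)
  have eC: "degree (s \<mu> * X - s m) \<le> D" using claimC[OF mu order.refl] X_def D_def by simp
  have Mj: "M j = 0 \<or> degree (M j) < D" if j: "j < 2^m" for j
  proof -
    have "poly (s \<mu> - [:c j:]) (- (- w j)) = 0" by (simp add: c_def)
    then have "lin j dvd (s \<mu> - [:c j:])" by (subst dvd_iff_poly_eq_0) simp
    then obtain Q' where Q': "s \<mu> - [:c j:] = lin j * Q'" by (elim dvdE)
    have lnz: "lin j \<noteq> 0" by simp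
    have QQ: "Q j = Q'" unfolding Q_def Q' by (rule nonzero_mult_div_cancel_left[OF lnz])
    define N where "N = s m - (s \<mu> - [:c j:]) * X"
    have NM: "N = lin j * M j" unfolding N_def M_def QQ Q' s_m_split[OF j]
      by (simp only: right_diff_distrib mult.assoc)
    have "N = - (s \<mu> * X - s m) + smult (c j) X" unfolding N_def by (simp add: algebra_simps)
    moreover have "degree (- (s \<mu> * X - s m)) \<le> D" using eC by (simp only: degree_minus)
    moreover have "degree (smult (c j) X) \<le> D" using Xd degree_smult_le[of "c j" X] by simp
    ultimately have Nd: "degree N \<le> D" by (simp add: degree_add_le)
    show ?thesis
    proof (cases "M j = 0")
      case False
      have "degree N = degree (lin j) + degree (M j)" unfolding NM using lnz False by (rule degree_mult_eq)
      then have "degree N = 1 + degree (M j)" by simp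
      then show ?thesis using Nd by simp
    qed simp
  qed
  define \<eta> where "\<eta> = f - S1 * X"
  have eta_sum: "\<eta> = (\<Sum>j<2^m. smult (r j) (M j))"
    unfolding \<eta>_def S1_def M_def lagrange[OF f_deg f_interp]
    by (simp add: sum_distrib_right smult_diff_right sum_subtractf)
  have eta: "\<eta> = 0 \<or> degree \<eta> < D"
  proof (cases "D = 0")
    case True
    then have "\<forall>j<2^m. M j = 0" using Mj by auto
    then show ?thesis unfolding eta_sum by simp
  next
    case False
    have "degree \<eta> \<le> D - 1" unfolding eta_sum
    proof (rule degree_sum_le)
      fix j assume "j \<in> {..<(2::nat)^m}"
      then have "M j = 0 \<or> degree (M j) < D" using Mj by simp
      then have "degree (M j) \<le> D - 1" by auto
      then show "degree (smult (r j) (M j)) \<le> D - 1" using degree_smult_le order.trans by blast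
    qed simp
    then show ?thesis using False by linarith
  qed
  have fe: "f = S1 * X + \<eta>" unfolding \<eta>_def by simp
  have "f div X = S1"
  proof (cases "\<eta> = 0")
    case True
    then show ?thesis using fe Xnz by simp
  next
    case False
    then have "degree \<eta> < degree X" using eta Xd by simp
    then have "\<eta> div X = 0" by (rule div_poly_less)
    then show ?thesis using fe Xnz by simp
  qed
  then show ?thesis unfolding Let_def Xe using fe eta
    by (simp add: S1_def Q_def c_def D_def)
qed

end

theorem lemma2:
  fixes m \<mu> :: nat and v :: "nat \<Rightarrow> 'a::{field,finite}"
    and r :: "nat \<Rightarrow> 'a" and f :: "'a poly"
  assumes char2: "(2::'a) = 0"
    and card: "card (UNIV :: 'a set) = 2 ^ m"
    and basis: "is_GF2_basis m v"
    and f_deg: "degree f < 2 ^ m"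
    and f_interp: "\<forall>j<2 ^ m. poly f (omega m v j) = r j"
    and mu: "\<mu> \<le> m"
  shows "let S1 = (\<Sum>j<2 ^ m. smult (r j)
                 ((subspace_poly m v \<mu> - [:poly (subspace_poly m v \<mu>) (omega m v j):])
                   div [:- omega m v j, 1:]));
             X = Xpoly m v (2 ^ m - 2 ^ \<mu>)
         in f div X = S1 \<and>
            (\<exists>\<eta>. f = S1 * X + \<eta> \<and> (\<eta> = 0 \<or> degree \<eta> < 2 ^ m - 2 ^ \<mu>))"
proof -
  interpret gf m v using char2 card basis by unfold_locales
  show ?thesis by (rule main[OF f_deg f_interp mu])
qed

end
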